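(* Let $\mathcal{D}$ be a dataset of $N$ points, $V$ a performance metric, $\mathcal{A}$ a learning algorithm, and $k^*$ a small-data threshold. For each $k<k^*$ let $\{\mathcal{A}_k^{(1)},\dots,\mathcal{A}_k^{(m_k)}\}$ be a set of allowed behaviors on coalitions of size exactly $k$, where each $m_k$ is bounded by a constant independent of $N$. Let $\mathcal{U}$ be the set of all utilities $U^{\mathbf b}$, indexed by choices $\mathbf b=(b_0,\dots,b_{k^*-1})$ made independently for each cardinality, defined by $U^{\mathbf b}(S)=V(\mathcal{A}(S))$ if $|S|\ge k^*$ and $U^{\mathbf b}(S)=V(\mathcal{A}_{|S|}^{(b_{|S|})}(S))$ if $|S|<k^*$ (so $\mathcal{U}\subseteq\mathcal{U}_{\mathrm{small}}(k^* )$), and assume $\mathcal{U}$ satisfies the bounded-range assumption. Then $\mathcal{U}$ is $(\epsilon,\delta)$-gameable under the aggregate-value favorability $F_{\mathrm{agg}}(\psi(U);P)$ for any $P\subseteq\mathcal{D}$.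
   Context: A learning algorithm $\mathcal{A}$ maps subsets of $\mathcal{D}$ to models; a performance metric $V$ maps models to $\mathbb{R}$; utilities are $U=V\circ\mathcal{A}:2^{\mathcal{D}}\to\mathbb{R}$. The small-data ambiguity set is $\mathcal{U}_{\mathrm{small}}(k^* )=\{V\circ\mathcal{A}' : \mathcal{A}'(S)=\mathcal{A}(S)\ \forall S\subseteq\mathcal{D},\ |S|\ge k^*\}$. Fix non-negative weights $w_0,\dots,w_{N-1}$ with $\sum_{S\subseteq\mathcal{D}\setminus\{i\}}w_{|S|}=1$; the semivalue is $\psi_i(U)=\sum_{S\subseteq\mathcal{D}\setminus\{i\}}w_{|S|}[U(S\cup\{i\})-U(S)]$, and $F_{\mathrm{agg}}(\psi(U);P)=\sum_{i\in P}\psi_i(U)$. Bounded-range assumption (standing): there is a finite $r$ with $\max_{S}U(S)-\min_{S}U(S)\le r$ for all $U\in\mathcal{U}$. A class $\mathcal{U}$ is $(\epsilon,\delta)$-gameable under favorability $F$ if there exists an algorithm that, for any $P\subseteq\mathcal{D}$, returns $U\in\mathcal{U}$ such that with probability at least $1-\delta$, $|F(\psi(U),P)-\max_{U'\in\mathcal{U}}F(\psi(U'),P)|<\epsilon$, using at most $O(\mathrm{poly}(N)\log(1/\delta)/\epsilon^2)$ utility function evaluations. *)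

theory Defs
  imports "HOL-Probability.Probability"
begin

text \<open>A randomized algorithm with oracle access: it may return a result, query the
oracle on a question of type 'q (receiving a real answer), or draw a uniformly random
number from {0..n}.\<close>

datatype ('q, 'a) qalg =
    Ret 'a
  | Qry 'q "real \<Rightarrow> ('q, 'a) qalg"
  | Smp nat "nat \<Rightarrow> ('q, 'a) qalg"

primrec run_alg :: "('q \<Rightarrow> real) \<Rightarrow> ('q, 'a) qalg \<Rightarrow> 'a pmf" where
  "run_alg orc (Ret a) = return_pmf a"
| "run_alg orc (Qry q k) = run_alg orc (k (orc q))"
| "run_alg orc (Smp n k) = bind_pmf (pmf_of_set {0..n}) (\<lambda>i. run_alg orc (k i))"

primrec num_queries :: "('q \<Rightarrow> real) \<Rightarrow> ('q, 'a) qalg \<Rightarrow> nat" where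
  "num_queries orc (Ret a) = 0"
| "num_queries orc (Qry q k) = Suc (num_queries orc (k (orc q)))"
| "num_queries orc (Smp n k) = Max ((\<lambda>i. num_queries orc (k i)) ` {0..n})"

text \<open>Dataset D = {0..<N}. The utility U^b: V(A S) on large coalitions,
V(Alt |S| (b |S|) S) on coalitions of size below kstar.\<close>
definition util :: "nat \<Rightarrow> (nat set \<Rightarrow> 'm) \<Rightarrow> ('m \<Rightarrow> real)
    \<Rightarrow> (nat \<Rightarrow> nat \<Rightarrow> nat set \<Rightarrow> 'm) \<Rightarrow> (nat \<Rightarrow> nat) \<Rightarrow> nat set \<Rightarrow> real" where
  "util kstar A V Alt b S =
     (if kstar \<le> card S then V (A S) else V (Alt (card S) (b (card S)) S))"

definition valid_choice :: "nat \<Rightarrow> (nat \<Rightarrow> nat) \<Rightarrow> (nat \<Rightarrow> nat) \<Rightarrow> bool" where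
  "valid_choice kstar m b \<longleftrightarrow> (\<forall>k<kstar. b k < m k)"

definition util_class :: "nat \<Rightarrow> (nat set \<Rightarrow> 'm) \<Rightarrow> ('m \<Rightarrow> real)
    \<Rightarrow> (nat \<Rightarrow> nat \<Rightarrow> nat set \<Rightarrow> 'm) \<Rightarrow> (nat \<Rightarrow> nat) \<Rightarrow> (nat set \<Rightarrow> real) set" where
  "util_class kstar A V Alt m = {util kstar A V Alt b | b. valid_choice kstar m b}"

definition semivalue :: "nat \<Rightarrow> (nat \<Rightarrow> real) \<Rightarrow> (nat set \<Rightarrow> real) \<Rightarrow> nat \<Rightarrow> real" where
  "semivalue N w U i =
     (\<Sum>S\<in>Pow ({0..<N} - {i}). w (card S) * (U (insert i S) - U S))"

definition F_agg :: "nat \<Rightarrow> (nat \<Rightarrow> real) \<Rightarrow> (nat set \<Rightarrow> real) \<Rightarrow> nat set \<Rightarrow> real" where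
  "F_agg N w U P = (\<Sum>i\<in>P. semivalue N w U i)"

definition semivalue_weights :: "nat \<Rightarrow> (nat \<Rightarrow> real) \<Rightarrow> bool" where
  "semivalue_weights N w \<longleftrightarrow> (\<forall>k<N. 0 \<le> w k) \<and>
     (\<forall>i<N. (\<Sum>S\<in>Pow ({0..<N} - {i}). w (card S)) = 1)"

definition bounded_range :: "nat \<Rightarrow> (nat set \<Rightarrow> real) set \<Rightarrow> real \<Rightarrow> bool" where
  "bounded_range N \<U> r \<longleftrightarrow>
     (\<forall>U\<in>\<U>. \<forall>S T. S \<subseteq> {0..<N} \<longrightarrow> T \<subseteq> {0..<N} \<longrightarrow> U S - U T \<le> r)"

definition util_oracle :: "nat \<Rightarrow> nat \<Rightarrow> (nat set \<Rightarrow> 'm) \<Rightarrow> ('m \<Rightarrow> real)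
    \<Rightarrow> (nat \<Rightarrow> nat \<Rightarrow> nat set \<Rightarrow> 'm) \<Rightarrow> (nat \<Rightarrow> nat) \<Rightarrow> (nat \<Rightarrow> nat) \<times> nat set \<Rightarrow> real" where
  "util_oracle N kstar A V Alt m q =
     (case q of (b, S) \<Rightarrow>
        if valid_choice kstar m b \<and> S \<subseteq> {0..<N} then util kstar A V Alt b S else 0)"

end

theory Submission
  imports Defs
begin


definition Kset :: "nat \<Rightarrow> nat \<Rightarrow> nat set set" where
  "Kset N k = {T. T \<subseteq> {0..<N} \<and> card T = k}"

definition cf :: "nat \<Rightarrow> (nat \<Rightarrow> real) \<Rightarrow> nat set \<Rightarrow> nat set \<Rightarrow> real" where
  "cf N w P T = w (card T - 1) * real (card (P \<inter> T)) - w (card T) * real (card (P - T))"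

lemma F_agg_expand:
  assumes P: "P \<subseteq> {0..<N}"
  shows "F_agg N w U P = (\<Sum>T\<in>Pow {0..<N}. cf N w P T * U T)"
proof -
  define D where "D = {0..<(N::nat)}"
  have fD: "finite D" by (simp add: D_def)
  have fP: "finite P" using P finite_subset by blast
  have A: "(\<Sum>S\<in>Pow (D - {i}). w (card S) * U (insert i S)) =
           (\<Sum>T\<in>{T\<in>Pow D. i \<in> T}. w (card T - 1) * U T)" if i: "i \<in> D" for i
  proof -
    have bij: "bij_betw (insert i) (Pow (D - {i})) {T\<in>Pow D. i \<in> T}"
      unfolding bij_betw_def
    proof
      show "inj_on (insert i) (Pow (D - {i}))" by (auto simp: inj_on_def)
    next
      show "insert i ` Pow (D - {i}) = {T \<in> Pow D. i \<in> T}"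
      proof
        show "insert i ` Pow (D - {i}) \<subseteq> {T \<in> Pow D. i \<in> T}" using i by auto
        show "{T \<in> Pow D. i \<in> T} \<subseteq> insert i ` Pow (D - {i})"
        proof
          fix T assume "T \<in> {T \<in> Pow D. i \<in> T}"
          then have "T = insert i (T - {i})" "T - {i} \<in> Pow (D - {i})" by auto
          then show "T \<in> insert i ` Pow (D - {i})" by blast
        qed
      qed
    qed
    have "(\<Sum>T\<in>{T\<in>Pow D. i \<in> T}. w (card T - 1) * U T) =
          (\<Sum>S\<in>Pow (D - {i}). w (card (insert i S) - 1) * U (insert i S))"
      by (rule sum.reindex_bij_betw[OF bij, symmetric])
    also have "\<dots> = (\<Sum>S\<in>Pow (D - {i}). w (card S) * U (insert i S))"
    proof (rule sum.cong[OF refl])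
      fix S assume "S \<in> Pow (D - {i})"
      then have "finite S" "i \<notin> S" using fD finite_subset by auto
      then show "w (card (insert i S) - 1) * U (insert i S) = w (card S) * U (insert i S)" by simp
    qed
    finally show ?thesis by simp
  qed
  have B: "Pow (D - {i}) = {T\<in>Pow D. i \<notin> T}" for i by auto
  have "F_agg N w U P = (\<Sum>i\<in>P. (\<Sum>S\<in>Pow (D - {i}). w (card S) * U (insert i S)))
         - (\<Sum>i\<in>P. (\<Sum>S\<in>Pow (D - {i}). w (card S) * U S))"
    unfolding F_agg_def semivalue_def D_def
    by (simp add: right_diff_distrib sum_subtractf)
  also have "(\<Sum>i\<in>P. (\<Sum>S\<in>Pow (D - {i}). w (card S) * U (insert i S)))
      = (\<Sum>i\<in>P. (\<Sum>T\<in>{T\<in>Pow D. i \<in> T}. w (card T - 1) * U T))"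
  proof (rule sum.cong[OF refl])
    fix i assume "i \<in> P"
    then have "i \<in> D" using P D_def by auto
    then show "(\<Sum>S\<in>Pow (D - {i}). w (card S) * U (insert i S)) = (\<Sum>T\<in>{T\<in>Pow D. i \<in> T}. w (card T - 1) * U T)" by (rule A)
  qed
  also have "\<dots> = (\<Sum>T\<in>Pow D. \<Sum>i\<in>{i\<in>P. i \<in> T}. w (card T - 1) * U T)"
    using sum.swap_restrict[of P "Pow D" "\<lambda>i T. w (card T - 1) * U T" "\<lambda>i T. i \<in> T"] fP fD
    by simp
  also have "\<dots> = (\<Sum>T\<in>Pow D. w (card T - 1) * real (card (P \<inter> T)) * U T)"
    by (intro sum.cong refl) (simp add: Int_def mult.commute)
  also have "(\<Sum>i\<in>P. (\<Sum>S\<in>Pow (D - {i}). w (card S) * U S))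
      = (\<Sum>i\<in>P. (\<Sum>T\<in>{T\<in>Pow D. i \<notin> T}. w (card T) * U T))"
    by (simp add: B)
  also have "\<dots> = (\<Sum>T\<in>Pow D. \<Sum>i\<in>{i\<in>P. i \<notin> T}. w (card T) * U T)"
    using sum.swap_restrict[of P "Pow D" "\<lambda>i T. w (card T) * U T" "\<lambda>i T. i \<notin> T"] fP fD
    by simp
  also have "\<dots> = (\<Sum>T\<in>Pow D. w (card T) * real (card (P - T)) * U T)"
    by (intro sum.cong refl) (simp add: set_diff_eq mult.commute)
  finally show ?thesis
    unfolding cf_def D_def[symmetric] by (simp add: sum_subtractf left_diff_distrib)
qed
definition bk :: "nat \<Rightarrow> nat \<Rightarrow> nat \<Rightarrow> nat" where
  "bk k j = (\<lambda>_. 0)(k := j)"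

lemma finite_Kset[simp]: "finite (Kset N k)"
  unfolding Kset_def by (rule finite_subset[of _ "Pow {0..<N}"]) auto

lemma card_Kset: "card (Kset N k) = N choose k"
  unfolding Kset_def using n_subsets[of "{0..<N}" k] by simp

lemma Kset_nonempty: "k \<le> N \<Longrightarrow> Kset N k \<noteq> {}"
  unfolding Kset_def by (rule ccontr) (auto dest: spec[of _ "{0..<k}"])

lemma weight_bound:
  assumes W: "semivalue_weights N w" and N: "1 \<le> N" and s: "s \<le> N - 1"
  shows "real (N - 1 choose s) * w s \<le> 1"
proof -
  define E where "E = {0..<N} - {0::nat}"
  have fE: "finite E" by (simp add: E_def)
  have cE: "card E = N - 1" using N by (simp add: E_def)
  have tot: "(\<Sum>S\<in>Pow E. w (card S)) = 1" using W N unfolding semivalue_weights_def E_def by auto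
  have nn: "\<And>S. S \<in> Pow E \<Longrightarrow> 0 \<le> w (card S)"
  proof -
    fix S assume "S \<in> Pow E"
    then have "card S \<le> card E" using fE by (simp add: card_mono)
    then have "card S < N" using cE N by simp
    then show "0 \<le> w (card S)" using W unfolding semivalue_weights_def by auto
  qed
  have sub: "{S. S \<subseteq> E \<and> card S = s} \<subseteq> Pow E" by auto
  have "real (N - 1 choose s) * w s = (\<Sum>S\<in>{S. S \<subseteq> E \<and> card S = s}. w (card S))"
    using n_subsets[OF fE, of s] cE by simp
  also have "\<dots> \<le> (\<Sum>S\<in>Pow E. w (card S))"
    by (rule sum_mono2) (use fE sub nn in auto)
  finally show ?thesis using tot by simp
qed

lemma coef_bound:
  assumes W: "semivalue_weights N w" and P: "P \<subseteq> {0..<N}" and T: "T \<in> Kset N k"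
  shows "real (card (Kset N k)) * \<bar>cf N w P T\<bar> \<le> real N"
proof (cases "N = 0")
  case True
  then have "P = {}" using P by auto
  then show ?thesis by (simp add: cf_def)
next
  case False
  then have N: "1 \<le> N" by simp
  have TD: "T \<subseteq> {0..<N}" and cT: "card T = k" using T by (auto simp: Kset_def)
  have fT: "finite T" using TD finite_subset by blast
  have kN: "k \<le> N" using card_mono[OF _ TD] cT by simp
  define a where "a = w (k - 1) * real (card (P \<inter> T))"
  define b where "b = w k * real (card (P - T))"
  have cfab: "cf N w P T = a - b" by (simp add: cf_def a_def b_def cT)
  have a: "0 \<le> a \<and> real (N choose k) * a \<le> real N"
  proof (cases k)
    case 0
    then have "T = {}" using cT fT by simp
    then show ?thesis by (simp add: a_def)
  next
    case (Suc k')
    have w0: "0 \<le> w k'" using W Suc kN unfolding semivalue_weights_def by auto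
    have c1: "card (P \<inter> T) \<le> k" using cT fT by (metis Int_lower2 card_mono)
    have "real (N choose k) * a \<le> real (N choose k) * (w k' * real k)"
      unfolding a_def using c1 w0 Suc by (intro mult_left_mono) (auto intro!: mult_left_mono)
    also have "real (N choose k) * (w k' * real k) = real (k * (N choose k)) * w k'"
      by simp
    also have "k * (N choose k) = N * (N - 1 choose k')"
      using binomial_absorption[of k' N] Suc by simp
    also have "real (N * (N - 1 choose k')) * w k' = real N * (real (N - 1 choose k') * w k')"
      by simp
    also have "\<dots> \<le> real N * 1"
      using weight_bound[OF W N, of k'] Suc kN by (intro mult_left_mono) auto
    finally show ?thesis using w0 Suc by (simp add: a_def)
  qed
  have b: "0 \<le> b \<and> real (N choose k) * b \<le> real N"
  proof (cases "k = N")
    case True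
    then have "T = {0..<N}" using TD cT by (metis card_atLeastLessThan card_subset_eq finite_atLeastLessThan diff_zero)
    then have "P - T = {}" using P by auto
    then have "card (P - T) = 0" by (metis card.empty)
    then have "b = 0" by (simp add: b_def)
    then show ?thesis by simp
  next
    case False
    then have kl: "k < N" using kN by simp
    have w0: "0 \<le> w k" using W kl unfolding semivalue_weights_def by auto
    have "card (P - T) \<le> card ({0..<N} - T)" using P by (intro card_mono) auto
    also have "\<dots> = N - k" using TD cT fT by (simp add: card_Diff_subset)
    finally have c1: "card (P - T) \<le> N - k" .
    have "real (N choose k) * b \<le> real (N choose k) * (w k * real (N - k))"
      unfolding b_def using c1 w0 by (intro mult_left_mono mult_left_mono) auto
    also have "real (N choose k) * (w k * real (N - k)) = real ((N - k) * (N choose k)) * w k"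
      by simp
    also have "(N - k) * (N choose k) = N * (N - 1 choose k)"
      by (rule binomial_absorb_comp)
    also have "real (N * (N - 1 choose k)) * w k = real N * (real (N - 1 choose k) * w k)"
      by simp
    also have "\<dots> \<le> real N * 1"
      using weight_bound[OF W N, of k] kl by (intro mult_left_mono) auto
    finally show ?thesis using w0 by (simp add: b_def)
  qed
  have "\<bar>a - b\<bar> \<le> max a b" using a b by auto
  then have "real (N choose k) * \<bar>a - b\<bar> \<le> real (N choose k) * max a b"
    by (intro mult_left_mono) auto
  also have "\<dots> \<le> real N" using a b by (auto simp: max_def)
  finally show ?thesis using cfab card_Kset by simp
qed


definition Dl :: "nat \<Rightarrow> (nat set \<Rightarrow> 'm) \<Rightarrow> ('m \<Rightarrow> real) \<Rightarrow> (nat \<Rightarrow> nat \<Rightarrow> nat set \<Rightarrow> 'm)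
   \<Rightarrow> nat \<Rightarrow> (nat \<Rightarrow> real) \<Rightarrow> nat set \<Rightarrow> nat \<Rightarrow> nat \<Rightarrow> real" where
  "Dl kstar A V Alt N w P k j = (\<Sum>T\<in>Kset N k. cf N w P T *
      (util kstar A V Alt (bk k j) T - util kstar A V Alt (\<lambda>_. 0) T))"

lemma bk0: "bk k 0 = (\<lambda>_. 0)" by (auto simp: bk_def)

lemma valid_bk:
  assumes "\<forall>k<kstar. 1 \<le> m k" and "k < kstar \<Longrightarrow> j < m k"
  shows "valid_choice kstar m (bk k j)"
  using assms unfolding valid_choice_def bk_def by auto

lemma valid_b0:
  assumes "\<forall>k<kstar. 1 \<le> m k"
  shows "valid_choice kstar m (\<lambda>_. 0)"
  using assms unfolding valid_choice_def by auto

lemma in_class: "valid_choice kstar m b \<Longrightarrow> util kstar A V Alt b \<in> util_class kstar A V Alt m"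
  unfolding util_class_def by blast

lemma F_decomp:
  assumes P: "P \<subseteq> {0..<N}"
  shows "F_agg N w (util kstar A V Alt b) P = F_agg N w (util kstar A V Alt (\<lambda>_. 0)) P
           + (\<Sum>k\<in>{..N}. Dl kstar A V Alt N w P k (b k))"
proof -
  let ?U = "util kstar A V Alt"
  let ?g = "\<lambda>T. cf N w P T * (?U b T - ?U (\<lambda>_. 0) T)"
  have "F_agg N w (?U b) P - F_agg N w (?U (\<lambda>_. 0)) P = (\<Sum>T\<in>Pow {0..<N}. ?g T)"
    unfolding F_agg_expand[OF P] by (simp add: sum_subtractf right_diff_distrib)
  also have "\<dots> = (\<Sum>k\<in>{..N}. \<Sum>T\<in>{T. T \<in> Pow {0..<N} \<and> card T = k}. ?g T)"
    by (rule sum.group[symmetric]) (auto intro: order.trans[OF card_mono[of "{0..<N}"]])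
  also have "\<dots> = (\<Sum>k\<in>{..N}. Dl kstar A V Alt N w P k (b k))"
  proof (rule sum.cong[OF refl])
    fix k assume "k \<in> {..N}"
    have eq: "{T. T \<in> Pow {0..<N} \<and> card T = k} = Kset N k" by (auto simp: Kset_def)
    show "(\<Sum>T\<in>{T. T \<in> Pow {0..<N} \<and> card T = k}. ?g T) = Dl kstar A V Alt N w P k (b k)"
      unfolding eq Dl_def
      by (intro sum.cong refl) (auto simp: Kset_def util_def bk_def)
  qed
  finally show ?thesis by simp
qed

lemma diff_range:
  assumes BR: "bounded_range N (util_class kstar A V Alt m) r"
    and Mk: "\<forall>k<kstar. 1 \<le> m k" and N: "1 \<le> N"
    and v: "valid_choice kstar m (bk k j)" and T: "T \<subseteq> {0..<N}"
  shows "\<bar>util kstar A V Alt (bk k j) T - util kstar A V Alt (\<lambda>_. 0) T\<bar> \<le> 2 * r"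
proof -
  let ?U = "util kstar A V Alt"
  define R where "R = (if k = 0 then {0..<N} else {})"
  have R: "R \<subseteq> {0..<N}" "card R \<noteq> k" using N by (auto simp: R_def)
  have eqR: "?U (bk k j) R = ?U (\<lambda>_. 0) R" using R(2) by (simp add: util_def bk_def)
  have c1: "?U (bk k j) \<in> util_class kstar A V Alt m" by (rule in_class[OF v])
  have c0: "?U (\<lambda>_. 0) \<in> util_class kstar A V Alt m" by (rule in_class[OF valid_b0[OF Mk]])
  have "?U (bk k j) T - ?U (bk k j) R \<le> r" "?U (bk k j) R - ?U (bk k j) T \<le> r"
       "?U (\<lambda>_. 0) T - ?U (\<lambda>_. 0) R \<le> r" "?U (\<lambda>_. 0) R - ?U (\<lambda>_. 0) T \<le> r"
    using BR c1 c0 T R(1) unfolding bounded_range_def by blast+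
  then show ?thesis using eqR by auto
qed

lemma Z_bound:
  assumes W: "semivalue_weights N w" and P: "P \<subseteq> {0..<N}"
    and BR: "bounded_range N (util_class kstar A V Alt m) r"
    and Mk: "\<forall>k<kstar. 1 \<le> m k"
    and v: "valid_choice kstar m (bk k j)" and T: "T \<in> Kset N k"
  shows "\<bar>real (card (Kset N k)) * cf N w P T *
           (util kstar A V Alt (bk k j) T - util kstar A V Alt (\<lambda>_. 0) T)\<bar> \<le> 2 * r * real N"
proof -
  let ?x = "real (card (Kset N k)) * cf N w P T"
  let ?y = "util kstar A V Alt (bk k j) T - util kstar A V Alt (\<lambda>_. 0) T"
  have cx: "\<bar>?x\<bar> \<le> real N" using coef_bound[OF W P T] by (simp add: abs_mult)
  show ?thesis
  proof (cases "N = 0")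
    case True
    then have "?x = 0" using cx by simp
    then show ?thesis using True by simp
  next
    case False
    have "T \<subseteq> {0..<N}" using T by (auto simp: Kset_def)
    then have cy: "\<bar>?y\<bar> \<le> 2 * r" using diff_range[OF BR Mk _ v] False by simp
    have "\<bar>?x * ?y\<bar> = \<bar>?x\<bar> * \<bar>?y\<bar>" by (simp add: abs_mult)
    also have "\<dots> \<le> real N * (2 * r)"
      using cx cy by (intro mult_mono) auto
    finally show ?thesis by (simp add: mult_ac)
  qed
qed

lemma Dl_as_mean:
  assumes "k \<le> N"
  shows "Dl kstar A V Alt N w P k j = (\<Sum>T\<in>Kset N k. real (card (Kset N k)) * cf N w P T *
           (util kstar A V Alt (bk k j) T - util kstar A V Alt (\<lambda>_. 0) T)) / real (card (Kset N k))"
proof -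
  have "card (Kset N k) \<noteq> 0" using Kset_nonempty[OF assms] by simp
  then show ?thesis unfolding Dl_def by (simp add: sum_distrib_left[symmetric] mult.assoc)
qed

lemma Dl_bound:
  assumes W: "semivalue_weights N w" and P: "P \<subseteq> {0..<N}"
    and BR: "bounded_range N (util_class kstar A V Alt m) r"
    and Mk: "\<forall>k<kstar. 1 \<le> m k" and kN: "k \<le> N"
    and v: "valid_choice kstar m (bk k j)"
  shows "\<bar>Dl kstar A V Alt N w P k j\<bar> \<le> 2 * r * real N"
proof -
  let ?Z = "\<lambda>T. real (card (Kset N k)) * cf N w P T *
           (util kstar A V Alt (bk k j) T - util kstar A V Alt (\<lambda>_. 0) T)"
  have cpos: "0 < real (card (Kset N k))" using Kset_nonempty[OF kN] by (simp add: card_gt_0_iff)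
  have "\<bar>sum ?Z (Kset N k)\<bar> \<le> (\<Sum>T\<in>Kset N k. \<bar>?Z T\<bar>)" by (rule sum_abs)
  also have "\<dots> \<le> (\<Sum>T\<in>Kset N k. 2 * r * real N)"
    by (intro sum_mono Z_bound[OF W P BR Mk v])
  also have "\<dots> = real (card (Kset N k)) * (2 * r * real N)" by simp
  finally have "\<bar>sum ?Z (Kset N k)\<bar> / real (card (Kset N k)) \<le> 2 * r * real N"
    using cpos by (simp add: divide_le_eq mult.commute)
  moreover have "\<bar>Dl kstar A V Alt N w P k j\<bar> = \<bar>sum ?Z (Kset N k)\<bar> / real (card (Kset N k))"
    by (simp add: Dl_as_mean[OF kN] abs_divide)
  ultimately show ?thesis by simp
qed


primrec ask :: "'q list \<Rightarrow> (('q \<Rightarrow> real) \<Rightarrow> 'a) \<Rightarrow> ('q, 'a) qalg" where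
  "ask [] f = Ret (f (\<lambda>_. 0))"
| "ask (q # qs) f = Qry q (\<lambda>x. ask qs (\<lambda>h. f (h(q := x))))"

lemma run_ask: "run_alg orc (ask qs f) = return_pmf (f (\<lambda>q. if q \<in> set qs then orc q else 0))"
proof (induction qs arbitrary: f)
  case Nil
  then show ?case by simp
next
  case (Cons q qs)
  have "(\<lambda>q'. if q' \<in> set qs then orc q' else 0)(q := orc q) = (\<lambda>q'. if q' \<in> set (q # qs) then orc q' else 0)"
    by (auto simp: fun_eq_iff)
  then show ?case using Cons by simp
qed

lemma nq_ask: "num_queries orc (ask qs f) = length qs"
  by (induction qs arbitrary: f) auto

definition Zh :: "nat \<Rightarrow> (nat \<Rightarrow> real) \<Rightarrow> nat set \<Rightarrow> nat \<Rightarrow> nat \<Rightarrow> ((nat \<Rightarrow> nat) \<times> nat set \<Rightarrow> real) \<Rightarrow> nat set \<Rightarrow> real" where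
  "Zh N w P k j h T = real (card (Kset N k)) * cf N w P T * (h (bk k j, T) - h (bk k 0, T))"

definition est :: "nat \<Rightarrow> (nat \<Rightarrow> real) \<Rightarrow> nat set \<Rightarrow> nat \<Rightarrow> ((nat \<Rightarrow> nat) \<times> nat set \<Rightarrow> real)
    \<Rightarrow> (nat \<times> nat \<Rightarrow> nat set) \<Rightarrow> nat \<Rightarrow> nat \<Rightarrow> real" where
  "est N w P L h \<omega> k j = (\<Sum>x\<in>{k} \<times> {..<L}. Zh N w P k j h (\<omega> x))"

definition decide :: "nat \<Rightarrow> nat \<Rightarrow> (nat \<Rightarrow> nat) \<Rightarrow> (nat \<Rightarrow> real) \<Rightarrow> nat set \<Rightarrow> nat
    \<Rightarrow> (nat \<times> nat \<Rightarrow> nat set) \<Rightarrow> ((nat \<Rightarrow> nat) \<times> nat set \<Rightarrow> real) \<Rightarrow> nat \<Rightarrow> nat" where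
  "decide N kstar m w P L \<omega> h = (\<lambda>k. if k \<le> N \<and> k < kstar then
      (SOME j. j < m k \<and> (\<forall>j'<m k. est N w P L h \<omega> k j' \<le> est N w P L h \<omega> k j)) else 0)"

definition Lev :: "nat \<Rightarrow> nat \<Rightarrow> nat set" where
  "Lev N kstar = {k. k \<le> N \<and> k < kstar}"

definition Omega :: "nat \<Rightarrow> nat \<Rightarrow> nat \<Rightarrow> (nat \<times> nat \<Rightarrow> nat set) set" where
  "Omega N kstar L = PiE_dflt (Lev N kstar \<times> {..<L}) {} (\<lambda>x. Kset N (fst x))"

definition qs :: "nat \<Rightarrow> nat \<Rightarrow> (nat \<Rightarrow> nat) \<Rightarrow> nat \<Rightarrow> (nat \<times> nat \<Rightarrow> nat set) \<Rightarrow> ((nat \<Rightarrow> nat) \<times> nat set) list" where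
  "qs N kstar m L \<omega> = concat (map (\<lambda>k. concat (map (\<lambda>l. map (\<lambda>j. (bk k j, \<omega> (k, l))) [0..<m k]) [0..<L]))
      [0..<min (Suc N) kstar])"

definition enumO :: "nat \<Rightarrow> nat \<Rightarrow> nat \<Rightarrow> (nat \<times> nat \<Rightarrow> nat set) list" where
  "enumO N kstar L = (SOME xs. set xs = Omega N kstar L \<and> distinct xs)"

definition Lnum :: "nat \<Rightarrow> real \<Rightarrow> nat \<Rightarrow> real \<Rightarrow> real \<Rightarrow> nat" where
  "Lnum M r N \<epsilon> \<delta> = nat \<lceil>2 * (2 * r * real N)\<^sup>2 * ln (2 * (real (N + 1) * real (M + 1)) / \<delta>)
      / (\<epsilon> / (4 * real (N + 1)))\<^sup>2\<rceil>"

definition theAlg :: "nat \<Rightarrow> real \<Rightarrow> nat \<Rightarrow> nat \<Rightarrow> (nat \<Rightarrow> nat) \<Rightarrow> (nat \<Rightarrow> real) \<Rightarrow> nat set \<Rightarrow> real \<Rightarrow> real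
    \<Rightarrow> ((nat \<Rightarrow> nat) \<times> nat set, nat \<Rightarrow> nat) qalg" where
  "theAlg M r N kstar m w P \<epsilon> \<delta> = (if 2 * r * real N * real (N + 1) < \<epsilon> then Ret (\<lambda>_. 0) else
     (let L = Lnum M r N \<epsilon> \<delta>; xs = enumO N kstar L in
       Smp (length xs - 1) (\<lambda>i. ask (qs N kstar m L (xs ! i)) (decide N kstar m w P L (xs ! i)))))"

lemma finite_Omega: "finite (Omega N kstar L)"
  unfolding Omega_def Lev_def by (intro finite_PiE_dflt) auto

lemma Omega_nonempty: "Omega N kstar L \<noteq> {}"
  unfolding Omega_def Lev_def using Kset_nonempty by auto

lemma enumO: "set (enumO N kstar L) = Omega N kstar L \<and> distinct (enumO N kstar L)"
  unfolding enumO_def by (rule someI_ex) (use finite_distinct_list[OF finite_Omega] in auto)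

lemma length_qs: "length (qs N kstar m L \<omega>) = (\<Sum>k<min (Suc N) kstar. L * m k)"
  unfolding qs_def by (simp add: length_concat o_def sum_list_triv atLeast0LessThan[symmetric] interv_sum_list_conv_sum_set_nat)

lemma run_theAlg:
  fixes M N :: nat and r \<epsilon> \<delta> :: real
  assumes "\<not> 2 * r * real N * real (N + 1) < \<epsilon>"
  defines "L \<equiv> Lnum M r N \<epsilon> \<delta>"
  shows "run_alg orc (theAlg M r N kstar m w P \<epsilon> \<delta>) =
    map_pmf (\<lambda>\<omega>. decide N kstar m w P L \<omega> (\<lambda>q. if q \<in> set (qs N kstar m L \<omega>) then orc q else 0))
      (pmf_of_set (Omega N kstar L))"
proof -
  define xs where "xs = enumO N kstar L"
  define res where "res = (\<lambda>\<omega>. decide N kstar m w P L \<omega> (\<lambda>q. if q \<in> set (qs N kstar m L \<omega>) then orc q else 0))"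
  have xs: "set xs = Omega N kstar L" "distinct xs" using enumO xs_def by auto
  have ne: "xs \<noteq> []" using xs(1) Omega_nonempty[of N kstar L] by auto
  have idx: "{0..length xs - Suc 0} = {0..<length xs}" using ne by (cases xs) auto
  have "run_alg orc (theAlg M r N kstar m w P \<epsilon> \<delta>) =
        bind_pmf (pmf_of_set {0..<length xs}) (\<lambda>i. return_pmf (res (xs ! i)))"
    using assms(1) by (simp add: theAlg_def Let_def L_def[symmetric] xs_def[symmetric] run_ask res_def idx)
  also have "\<dots> = map_pmf res (map_pmf (\<lambda>i. xs ! i) (pmf_of_set {0..<length xs}))"
    by (simp add: map_pmf_def bind_return_pmf bind_assoc_pmf)
  also have "map_pmf (\<lambda>i. xs ! i) (pmf_of_set {0..<length xs}) = pmf_of_set ((\<lambda>i. xs ! i) ` {0..<length xs})"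
    using ne xs(2) by (intro map_pmf_of_set_inj) (auto simp: inj_on_def nth_eq_iff_index_eq)
  also have "(\<lambda>i. xs ! i) ` {0..<length xs} = Omega N kstar L"
    using nth_image[of "length xs" xs] xs(1) by simp
  finally show ?thesis by (simp add: res_def)
qed

lemma nq_theAlg:
  assumes "\<forall>k<kstar. m k \<le> M"
  shows "real (num_queries orc (theAlg M r N kstar m w P \<epsilon> \<delta>)) \<le>
    (if 2 * r * real N * real (N + 1) < \<epsilon> then 0 else real (Suc N) * real (Lnum M r N \<epsilon> \<delta>) * real M)"
proof (cases "2 * r * real N * real (N + 1) < \<epsilon>")
  case True
  then show ?thesis by (simp add: theAlg_def)
next
  case False
  define L where "L = Lnum M r N \<epsilon> \<delta>"
  define xs where "xs = enumO N kstar L"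
  have nq: "num_queries orc (theAlg M r N kstar m w P \<epsilon> \<delta>) =
     Max ((\<lambda>i. (\<Sum>k<min (Suc N) kstar. L * m k)) ` {0..length xs - 1})"
    using False by (simp add: theAlg_def Let_def L_def[symmetric] xs_def[symmetric] nq_ask length_qs)
  also have "\<dots> = (\<Sum>k<min (Suc N) kstar. L * m k)" by simp
  also have "\<dots> \<le> (\<Sum>k<min (Suc N) kstar. L * M)"
    using assms by (intro sum_mono) auto
  also have "\<dots> \<le> Suc N * L * M"
  proof -
    have "(\<Sum>k<min (Suc N) kstar. L * M) = min (Suc N) kstar * (L * M)" by simp
    also have "\<dots> \<le> Suc N * (L * M)" by (rule mult_le_mono1) simp
    finally show ?thesis by (simp only: mult.assoc)
  qed
  finally have "real (num_queries orc (theAlg M r N kstar m w P \<epsilon> \<delta>)) \<le> real (Suc N * L * M)"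
    by (rule of_nat_mono)
  then show ?thesis using False by (simp add: L_def algebra_simps)
qed


lemma Omega_Pi: "pmf_of_set (Omega N kstar L) = Pi_pmf (Lev N kstar \<times> {..<L}) {} (\<lambda>x. pmf_of_set (Kset N (fst x)))"
  unfolding Omega_def
  by (rule Pi_pmf_of_set[symmetric]) (auto simp: Lev_def Kset_nonempty)

lemma hoeff:
  fixes Z :: "nat set \<Rightarrow> real" and B \<eta> :: real
  assumes kL: "k \<in> Lev N kstar" and L: "1 \<le> L" and B: "0 < B" and eta: "0 \<le> \<eta>"
    and Zb: "\<And>T. T \<in> Kset N k \<Longrightarrow> \<bar>Z T\<bar> \<le> B"
  shows "measure_pmf.prob (pmf_of_set (Omega N kstar L))
     {\<omega>. real L * \<eta> \<le> \<bar>(\<Sum>x\<in>{k}\<times>{..<L}. Z (\<omega> x)) - real L * ((\<Sum>T\<in>Kset N k. Z T) / real (card (Kset N k)))\<bar>}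
     \<le> 2 * exp (- (real L * \<eta>\<^sup>2 / (2 * B\<^sup>2)))"
proof -
  define I where "I = Lev N kstar \<times> {..<L}"
  define J where "J = {k} \<times> {..<L}"
  define p where "p = (\<lambda>x::nat\<times>nat. pmf_of_set (Kset N (fst x)))"
  define Q where "Q = Pi_pmf I {} p"
  have Q: "pmf_of_set (Omega N kstar L) = Q" unfolding Q_def I_def p_def by (rule Omega_Pi)
  have fI: "finite I" unfolding I_def Lev_def by auto
  have JI: "J \<subseteq> I" using kL unfolding I_def J_def by auto
  have fJ: "finite J" unfolding J_def by auto
  have kN: "k \<le> N" using kL by (simp add: Lev_def)
  have setQ: "set_pmf Q = Omega N kstar L"
    using Q finite_Omega Omega_nonempty by (metis set_pmf_of_set)
  have ind0: "prob_space.indep_vars (measure_pmf Q) (\<lambda>_. count_space UNIV) (\<lambda>x f. f x) I"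
    unfolding Q_def by (rule indep_vars_Pi_pmf[OF fI])
  have ind: "prob_space.indep_vars (measure_pmf Q) (\<lambda>_. borel) (\<lambda>x \<omega>. Z (\<omega> x)) J"
    by (rule prob_space.indep_vars_compose2[OF measure_pmf.prob_space_axioms prob_space.indep_vars_subset[OF measure_pmf.prob_space_axioms ind0 JI]]) auto
  have ex: "measure_pmf.expectation Q (\<lambda>\<omega>. Z (\<omega> x)) = (\<Sum>T\<in>Kset N k. Z T) / real (card (Kset N k))"
    if x: "x \<in> J" for x
  proof -
    have "measure_pmf.expectation Q (\<lambda>\<omega>. Z (\<omega> x)) = measure_pmf.expectation (map_pmf (\<lambda>\<omega>. \<omega> x) Q) Z"
      by simp
    also have "map_pmf (\<lambda>\<omega>. \<omega> x) Q = pmf_of_set (Kset N k)"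
      unfolding Q_def using Pi_pmf_component[OF fI, of x "{}" p] x JI by (auto simp: p_def J_def)
    also have "measure_pmf.expectation (pmf_of_set (Kset N k)) Z = (\<Sum>T\<in>Kset N k. Z T) / real (card (Kset N k))"
      using Kset_nonempty[OF kN] by (simp add: integral_pmf_of_set)
    finally show ?thesis .
  qed
  interpret H: Hoeffding_ineq "measure_pmf Q" J "\<lambda>x \<omega>. Z (\<omega> x)" "\<lambda>_. -B" "\<lambda>_. B"
    "\<Sum>x\<in>J. measure_pmf.expectation Q (\<lambda>\<omega>. Z (\<omega> x))"
  proof unfold_locales
    show "finite J" by (rule fJ)
    show "prob_space.indep_vars (measure_pmf Q) (\<lambda>_. borel) (\<lambda>x \<omega>. Z (\<omega> x)) J" by (rule ind)
    fix x assume x: "x \<in> J"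
    show "AE \<omega> in measure_pmf Q. Z (\<omega> x) \<in> {-B..B}"
    proof (rule AE_pmfI)
      fix \<omega> assume "\<omega> \<in> set_pmf Q"
      then have "\<omega> x \<in> Kset N k" using x JI setQ by (auto simp: Omega_def PiE_dflt_def J_def I_def)
      then have "\<bar>Z (\<omega> x)\<bar> \<le> B" by (rule Zb)
      then show "Z (\<omega> x) \<in> {-B..B}" by (auto simp: abs_le_iff)
    qed
  qed
  have mu: "(\<Sum>x\<in>J. measure_pmf.expectation Q (\<lambda>\<omega>. Z (\<omega> x))) = real L * ((\<Sum>T\<in>Kset N k. Z T) / real (card (Kset N k)))"
    using ex by (simp add: J_def card_cartesian_product)
  have sq: "(\<Sum>x\<in>J. (B - - B)\<^sup>2) = 4 * real L * B\<^sup>2"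
    by (simp add: J_def card_cartesian_product power2_eq_square)
  have pos: "(\<Sum>x\<in>J. (B - - B)\<^sup>2) > 0" using sq B L by simp
  have "measure_pmf.prob Q {\<omega>\<in>space (measure_pmf Q). real L * \<eta> \<le> \<bar>(\<Sum>x\<in>J. Z (\<omega> x)) - (\<Sum>x\<in>J. measure_pmf.expectation Q (\<lambda>\<omega>. Z (\<omega> x)))\<bar>}
     \<le> 2 * exp (-2 * (real L * \<eta>)\<^sup>2 / (\<Sum>x\<in>J. (B - - B)\<^sup>2))"
    using H.Hoeffding_ineq_abs_ge[of "real L * \<eta>"] eta pos by simp
  also have "-2 * (real L * \<eta>)\<^sup>2 / (\<Sum>x\<in>J. (B - - B)\<^sup>2) = - (real L * \<eta>\<^sup>2 / (2 * B\<^sup>2))"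
    unfolding sq using B L by (simp add: power2_eq_square field_simps)
  finally show ?thesis unfolding Q J_def[symmetric] mu[symmetric] by simp
qed


lemma ln2_half: "1/2 \<le> ln (2::real)"
  using ln2_ge_two_thirds by simp

lemma argmax_ex:
  fixes f :: "nat \<Rightarrow> real"
  assumes "1 \<le> n"
  shows "\<exists>j. j < n \<and> (\<forall>j'<n. f j' \<le> f j)"
proof -
  have "0 \<in> {..<n}" using assms by simp
  then have ne: "f ` {..<n} \<noteq> {}" by blast
  have "Max (f ` {..<n}) \<in> f ` {..<n}" using ne by (intro Max_in) auto
  then obtain j where j: "j < n" "f j = Max (f ` {..<n})" by auto
  have "\<forall>j'<n. f j' \<le> f j" using j(2) by (auto intro: Max_ge)
  then show ?thesis using j(1) by blast
qed

lemma decide_max: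
  assumes Mk: "\<forall>k<kstar. 1 \<le> m k" and k: "k \<le> N" "k < kstar"
  shows "decide N kstar m w P L \<omega> h k < m k \<and>
    (\<forall>j'<m k. est N w P L h \<omega> k j' \<le> est N w P L h \<omega> k (decide N kstar m w P L \<omega> h k))"
proof -
  have "\<exists>j. j < m k \<and> (\<forall>j'<m k. est N w P L h \<omega> k j' \<le> est N w P L h \<omega> k j)"
    using Mk k by (intro argmax_ex) auto
  then show ?thesis unfolding decide_def using k by (simp only: if_True simp_thms) (rule someI_ex)
qed

lemma decide_valid:
  assumes Mk: "\<forall>k<kstar. 1 \<le> m k"
  shows "valid_choice kstar m (decide N kstar m w P L \<omega> h)"
  unfolding valid_choice_def
proof (intro allI impI)
  fix k assume k: "k < kstar"
  show "decide N kstar m w P L \<omega> h k < m k"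
  proof (cases "k \<le> N")
    case True
    then show ?thesis using decide_max[OF Mk True k] by blast
  next
    case False
    have "1 \<le> m k" using Mk k by blast
    then show ?thesis using False by (simp add: decide_def)
  qed
qed

lemma Dl_zero: "kstar \<le> k \<Longrightarrow> Dl kstar A V Alt N w P k j = 0"
  unfolding Dl_def by (intro sum.neutral) (auto simp: Kset_def util_def)

lemma est_eq:
  assumes Mk: "\<forall>k<kstar. 1 \<le> m k" and \<omega>: "\<omega> \<in> Omega N kstar L"
    and k: "k \<in> Lev N kstar" and j: "j < m k"
  shows "est N w P L (\<lambda>q. if q \<in> set (qs N kstar m L \<omega>) then util_oracle N kstar A V Alt m q else 0) \<omega> k j
    = (\<Sum>x\<in>{k}\<times>{..<L}. real (card (Kset N k)) * cf N w P (\<omega> x) *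
        (util kstar A V Alt (bk k j) (\<omega> x) - util kstar A V Alt (\<lambda>_. 0) (\<omega> x)))"
  unfolding est_def
proof (rule sum.cong[OF refl])
  fix x assume x: "x \<in> {k} \<times> {..<L}"
  then obtain l where xl: "x = (k, l)" "l < L" by auto
  have kk: "k \<le> N" "k < kstar" using k by (auto simp: Lev_def)
  have T: "\<omega> x \<in> Kset N k" using \<omega> x k unfolding Omega_def PiE_dflt_def by auto
  then have TD: "\<omega> x \<subseteq> {0..<N}" by (simp add: Kset_def)
  have m0: "0 < m k" using j by simp
  have inq: "(bk k j', \<omega> x) \<in> set (qs N kstar m L \<omega>)" if "j' < m k" for j'
  proof -
    have "k \<in> {0..<min (Suc N) kstar}" "l \<in> {0..<L}" "j' \<in> {0..<m k}" using that xl kk by auto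
    then show ?thesis unfolding qs_def xl by force
  qed
  have v: "valid_choice kstar m (bk k j')" if "j' < m k" for j'
    using valid_bk[OF Mk] that by blast
  show "Zh N w P k j (\<lambda>q. if q \<in> set (qs N kstar m L \<omega>) then util_oracle N kstar A V Alt m q else 0) (\<omega> x) =
    real (card (Kset N k)) * cf N w P (\<omega> x) *
        (util kstar A V Alt (bk k j) (\<omega> x) - util kstar A V Alt (\<lambda>_. 0) (\<omega> x))"
    unfolding Zh_def using inq[OF j] inq[OF m0] v[OF j] v[OF m0] TD
    by (simp add: util_oracle_def bk0)
qed

lemma class_finite:
  "finite (util_class kstar A V Alt m)"
proof -
  have "util_class kstar A V Alt m \<subseteq> util kstar A V Alt ` PiE_dflt {..<kstar} 0 (\<lambda>k. {..<m k})"
  proof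
    fix U assume "U \<in> util_class kstar A V Alt m"
    then obtain b where b: "valid_choice kstar m b" "U = util kstar A V Alt b"
      unfolding util_class_def by blast
    define b' where "b' = (\<lambda>k. if k < kstar then b k else 0)"
    have "b' \<in> PiE_dflt {..<kstar} 0 (\<lambda>k. {..<m k})"
      using b(1) by (auto simp: b'_def PiE_dflt_def valid_choice_def)
    moreover have "U = util kstar A V Alt b'"
      using b(2) by (auto simp: fun_eq_iff util_def b'_def)
    ultimately show "U \<in> util kstar A V Alt ` PiE_dflt {..<kstar} 0 (\<lambda>k. {..<m k})" by blast
  qed
  moreover have "finite (PiE_dflt {..<kstar} (0::nat) (\<lambda>k. {..<m k}))" by (intro finite_PiE_dflt) auto
  ultimately show ?thesis using finite_subset by blast
qed

lemma opt_props:
  fixes N kstar :: nat and m :: "nat \<Rightarrow> nat" and w :: "nat \<Rightarrow> real" and P :: "nat set"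
    and A :: "nat set \<Rightarrow> 'm" and V :: "'m \<Rightarrow> real" and Alt :: "nat \<Rightarrow> nat \<Rightarrow> nat set \<Rightarrow> 'm"
  assumes Mk: "\<forall>k<kstar. 1 \<le> m k"
  defines "opt \<equiv> Max ((\<lambda>U. F_agg N w U P) ` util_class kstar A V Alt m)"
  shows "\<exists>b. valid_choice kstar m b \<and> opt = F_agg N w (util kstar A V Alt b) P"
    and "\<And>b. valid_choice kstar m b \<Longrightarrow> F_agg N w (util kstar A V Alt b) P \<le> opt"
proof -
  have ne: "util_class kstar A V Alt m \<noteq> {}" using in_class[OF valid_b0[OF Mk]] by blast
  have fin: "finite ((\<lambda>U. F_agg N w U P) ` util_class kstar A V Alt m)" using class_finite by (rule finite_imageI)
  have "opt \<in> (\<lambda>U. F_agg N w U P) ` util_class kstar A V Alt m"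
    unfolding opt_def using fin ne by (intro Max_in) auto
  then show "\<exists>b. valid_choice kstar m b \<and> opt = F_agg N w (util kstar A V Alt b) P"
    unfolding util_class_def by blast
  fix b assume "valid_choice kstar m b"
  then show "F_agg N w (util kstar A V Alt b) P \<le> opt"
    unfolding opt_def using fin by (intro Max_ge) (auto intro: in_class)
qed


lemma Lnum_props:
  fixes M N :: nat and r \<epsilon> \<delta> :: real
  assumes N: "1 \<le> N" and e: "0 < \<epsilon>" "\<epsilon> \<le> 2*r*real N*real (N+1)" and d: "0 < \<delta>" "\<delta> \<le> 1/2"
  defines "X \<equiv> 2 * (2 * r * real N)\<^sup>2 * ln (2 * (real (N + 1) * real (M + 1)) / \<delta>) / (\<epsilon> / (4 * real (N + 1)))\<^sup>2"
  shows "0 < X" "X \<le> real (Lnum M r N \<epsilon> \<delta>)" "real (Lnum M r N \<epsilon> \<delta>) \<le> X + 1" "1 \<le> Lnum M r N \<epsilon> \<delta>"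
proof -
  have r: "0 < r"
  proof (rule ccontr)
    assume "\<not> 0 < r"
    then have "2*r*real N*real (N+1) \<le> 0" by (simp add: mult_nonpos_nonneg)
    then show False using e by linarith
  qed
  have K: "2 \<le> real (N + 1) * real (M + 1)"
    using mult_mono[of 2 "real (N+1)" 1 "real (M+1)"] N by simp
  have "1 < 2 * (real (N + 1) * real (M + 1)) / \<delta>" using K d by (simp add: field_simps)
  then have lnp: "0 < ln (2 * (real (N + 1) * real (M + 1)) / \<delta>)" by simp
  show X: "0 < X" unfolding X_def using r N e lnp by (intro divide_pos_pos mult_pos_pos) auto
  have "X \<le> real_of_int \<lceil>X\<rceil>" by simp
  also have "real_of_int \<lceil>X\<rceil> = real (nat \<lceil>X\<rceil>)" using X by simp
  finally show "X \<le> real (Lnum M r N \<epsilon> \<delta>)" unfolding Lnum_def X_def .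
  have "real (nat \<lceil>X\<rceil>) = real_of_int \<lceil>X\<rceil>" using X by simp
  also have "\<dots> \<le> X + 1" by simp
  finally show "real (Lnum M r N \<epsilon> \<delta>) \<le> X + 1" unfolding Lnum_def X_def .
  show "1 \<le> Lnum M r N \<epsilon> \<delta>" unfolding Lnum_def X_def[symmetric] using X by linarith
qed

lemma query_arith:
  fixes M N :: nat and r \<epsilon> \<delta> :: real
  assumes N: "1 \<le> N" and e: "0 < \<epsilon>" "\<epsilon> \<le> 2*r*real N*real (N+1)" and d: "0 < \<delta>" "\<delta> \<le> 1/2"
  shows "real (Suc N) * real (Lnum M r N \<epsilon> \<delta>) * real M \<le>
    10368 * real ((M+1)^2) * r^2 * real N ^ 6 * ln (1/\<delta>) / \<epsilon>^2"
proof -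
  define K where "K = real (N + 1) * real (M + 1)"
  define \<Lambda> where "\<Lambda> = ln (1/\<delta>)"
  define G where "G = r^2 * real N ^ 2 * real (N+1) ^ 2 / \<epsilon>^2"
  define L where "L = real (Lnum M r N \<epsilon> \<delta>)"
  have K1: "1 \<le> K" unfolding K_def using mult_mono[of 1 "real (N+1)" 1 "real (M+1)"] by simp
  have Lam: "1/2 \<le> \<Lambda>"
  proof -
    have "ln 2 \<le> ln (1/\<delta>)" using d by (subst ln_le_cancel_iff) (auto simp: field_simps)
    then show ?thesis using ln2_half unfolding \<Lambda>_def by linarith
  qed
  have G0: "0 \<le> G" unfolding G_def by simp
  have G1: "1 \<le> 4 * G"
  proof -
    have pm: "\<epsilon>^2 \<le> (2*r*real N*real (N+1))^2" using e by (intro power_mono) auto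
    have h: "(2*r*real N*real (N+1))^2 = 4 * (r^2 * real N ^ 2 * real (N+1) ^ 2)" by (simp add: power_mult_distrib)
    have e2: "0 < \<epsilon>^2" using e by simp
    have "4 * G = (4 * (r^2 * real N ^ 2 * real (N+1) ^ 2)) / \<epsilon>^2" unfolding G_def by simp
    also have "1 \<le> \<dots>" using pm h e2 by (simp add: le_divide_eq)
    finally show ?thesis .
  qed
  have lnK: "ln (2 * K / \<delta>) \<le> 5 * K * \<Lambda>"
  proof -
    have l1: "ln (2 * K / \<delta>) = ln (2 * K) + \<Lambda>" unfolding \<Lambda>_def using K1 d
      by (simp add: ln_div ln_mult)
    have l2: "ln (2 * K) \<le> 2 * K - 1" using K1 by (intro ln_le_minus_one) simp
    have "2*K*1 \<le> 2*K*(2*\<Lambda>)" using K1 Lam by (intro mult_left_mono) auto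
    then have l3: "2 * K - 1 \<le> 4 * K * \<Lambda>" by simp
    have l4: "\<Lambda> \<le> K * \<Lambda>" using mult_right_mono[of 1 K \<Lambda>] K1 Lam by simp
    show ?thesis using l1 l2 l3 l4 by simp
  qed
  have Xeq: "2 * (2 * r * real N)\<^sup>2 * ln (2 * K / \<delta>) / (\<epsilon> / (4 * real (N + 1)))\<^sup>2 = 128 * G * ln (2 * K / \<delta>)"
    unfolding G_def using e by (simp add: field_simps power2_eq_square)
  have "L \<le> 128 * G * ln (2 * K / \<delta>) + 1"
    using Lnum_props(3)[OF N e d, of M] unfolding L_def K_def[symmetric] Xeq .
  also have "\<dots> \<le> 128 * G * (5 * K * \<Lambda>) + 4 * G * (2 * \<Lambda>)"
  proof -
    have "128 * G * ln (2 * K / \<delta>) \<le> 128 * G * (5 * K * \<Lambda>)" using lnK G0 by (intro mult_left_mono) auto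
    moreover have "1 \<le> 4 * G * (2 * \<Lambda>)" using mult_mono[of 1 "4*G" 1 "2*\<Lambda>"] G1 Lam by simp
    ultimately show ?thesis by linarith
  qed
  also have "\<dots> \<le> 648 * G * K * \<Lambda>"
  proof -
    have "0 \<le> G * \<Lambda>" using G0 Lam by simp
    then have "8 * (G * \<Lambda>) \<le> 8 * (G * \<Lambda>) * K" using K1 by (simp add: mult_le_cancel_left1)
    then show ?thesis by (simp add: algebra_simps)
  qed
  finally have LB: "L \<le> 648 * G * K * \<Lambda>" .
  have "real (Suc N) * L * real M \<le> real (Suc N) * (648 * G * K * \<Lambda>) * real M"
    using LB by (intro mult_right_mono mult_left_mono) auto
  also have "\<dots> = 648 * (real M * real (M+1)) * r^2 * (real N^2 * real (N+1)^4) * \<Lambda> / \<epsilon>^2"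
    unfolding G_def K_def by (simp add: field_simps power2_eq_square power4_eq_xxxx)
  also have "\<dots> \<le> 648 * real ((M+1)^2) * r^2 * (real N^2 * (16 * real N^4)) * \<Lambda> / \<epsilon>^2"
  proof -
    have a: "real M * real (M+1) \<le> real ((M+1)^2)" by (simp add: power2_eq_square algebra_simps)
    have "real (N+1) \<le> 2 * real N" using N by simp
    then have "real (N+1)^4 \<le> (2 * real N)^4" by (intro power_mono) auto
    then have "real (N+1)^4 \<le> 16 * real N^4" by (simp add: power_mult_distrib)
    then have b: "real N^2 * real (N+1)^4 \<le> real N^2 * (16 * real N^4)" by (rule mult_left_mono) simp
    have c: "0 \<le> r^2 * \<Lambda> / \<epsilon>^2" using Lam by simp
    have "648 * (real M * real (M+1)) * (real N^2 * real (N+1)^4) * (r^2 * \<Lambda> / \<epsilon>^2)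
        \<le> 648 * real ((M+1)^2) * (real N^2 * (16 * real N^4)) * (r^2 * \<Lambda> / \<epsilon>^2)"
    proof (rule mult_right_mono[OF _ c])
      have "648 * (real M * real (M+1)) \<le> 648 * real ((M+1)^2)" using a by simp
      then show "648 * (real M * real (M+1)) * (real N^2 * real (N+1)^4) \<le> 648 * real ((M+1)^2) * (real N^2 * (16 * real N^4))"
        using b by (rule mult_mono) auto
    qed
    then show ?thesis by (simp add: field_simps)
  qed
  also have "\<dots> = 10368 * real ((M+1)^2) * r^2 * real N ^ 6 * ln (1/\<delta>) / \<epsilon>^2"
    unfolding \<Lambda>_def by (simp add: power_add[symmetric] field_simps)
  finally show ?thesis unfolding L_def .
qed


lemma good_event:
  fixes A :: "nat set \<Rightarrow> 'm"
  assumes W: "semivalue_weights N w" and Mk: "\<forall>k<kstar. 1 \<le> m k" and P: "P \<subseteq> {0..<N}"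
    and \<omega>: "\<omega> \<in> Omega N kstar L" and L: "1 \<le> L" and eta: "0 \<le> \<eta>"
    and nb: "\<And>k j. k \<in> Lev N kstar \<Longrightarrow> j < m k \<Longrightarrow>
       \<bar>(\<Sum>x\<in>{k}\<times>{..<L}. real (card (Kset N k)) * cf N w P (\<omega> x) *
        (util kstar A V Alt (bk k j) (\<omega> x) - util kstar A V Alt (\<lambda>_. 0) (\<omega> x)))
        - real L * Dl kstar A V Alt N w P k j\<bar> < real L * \<eta>"
    and b: "valid_choice kstar m b"
  shows "F_agg N w (util kstar A V Alt b) P - F_agg N w (util kstar A V Alt
     (decide N kstar m w P L \<omega> (\<lambda>q. if q \<in> set (qs N kstar m L \<omega>) then util_oracle N kstar A V Alt m q else 0))) P
     \<le> real (N + 1) * (2 * \<eta>)"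
proof -
  define h where "h = (\<lambda>q. if q \<in> set (qs N kstar m L \<omega>) then util_oracle N kstar A V Alt m q else 0)"
  define bh where "bh = decide N kstar m w P L \<omega> h"
  let ?Dl = "Dl kstar A V Alt N w P"
  have Lp: "0 < real L" using L by simp
  have tm: "?Dl k (b k) - ?Dl k (bh k) \<le> 2 * \<eta>" if kN: "k \<in> {..N}" for k
  proof (cases "k < kstar")
    case True
    have kL: "k \<in> Lev N kstar" using True kN by (simp add: Lev_def)
    have dm: "bh k < m k \<and> (\<forall>j'<m k. est N w P L h \<omega> k j' \<le> est N w P L h \<omega> k (bh k))"
      unfolding bh_def using decide_max[OF Mk _ True] kN by simp
    have bk: "b k < m k" using b True by (simp add: valid_choice_def)
    have e1: "\<bar>est N w P L h \<omega> k (b k) - real L * ?Dl k (b k)\<bar> < real L * \<eta>"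
      unfolding h_def est_eq[OF Mk \<omega> kL bk] using nb[OF kL bk] .
    have e2: "\<bar>est N w P L h \<omega> k (bh k) - real L * ?Dl k (bh k)\<bar> < real L * \<eta>"
      unfolding h_def est_eq[OF Mk \<omega> kL conjunct1[OF dm]] using nb[OF kL conjunct1[OF dm]] .
    have e3: "est N w P L h \<omega> k (b k) \<le> est N w P L h \<omega> k (bh k)" using dm bk by blast
    have "real L * (?Dl k (b k) - ?Dl k (bh k)) \<le> real L * (2 * \<eta>)"
      using e1 e2 e3 by (simp add: right_diff_distrib abs_less_iff)
    then show ?thesis using Lp by simp
  next
    case False
    then have "?Dl k (b k) = 0" "?Dl k (bh k) = 0" by (simp_all add: Dl_zero)
    then show ?thesis using eta by simp
  qed
  have "F_agg N w (util kstar A V Alt b) P - F_agg N w (util kstar A V Alt bh) P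
      = (\<Sum>k\<in>{..N}. ?Dl k (b k)) - (\<Sum>k\<in>{..N}. ?Dl k (bh k))"
    using F_decomp[OF P, where b=b and kstar=kstar and A=A and V=V and Alt=Alt and w=w] F_decomp[OF P, where b=bh and kstar=kstar and A=A and V=V and Alt=Alt and w=w] by simp
  also have "\<dots> = (\<Sum>k\<in>{..N}. ?Dl k (b k) - ?Dl k (bh k))" by (simp add: sum_subtractf)
  also have "\<dots> \<le> (\<Sum>k\<in>{..N}. 2 * \<eta>)" by (intro sum_mono tm)
  also have "\<dots> = real (N + 1) * (2 * \<eta>)" by simp
  finally show ?thesis unfolding bh_def h_def .
qed


lemma main_lemma:
  fixes M :: nat and r :: real and N kstar :: nat and m :: "nat \<Rightarrow> nat" and w :: "nat \<Rightarrow> real"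
    and P :: "nat set" and \<epsilon> \<delta> :: real
    and A :: "nat set \<Rightarrow> 'm" and V :: "'m \<Rightarrow> real" and Alt :: "nat \<Rightarrow> nat \<Rightarrow> nat set \<Rightarrow> 'm"
  assumes W: "semivalue_weights N w" and MK: "\<forall>k<kstar. 1 \<le> m k \<and> m k \<le> M"
    and BR: "bounded_range N (util_class kstar A V Alt m) r" and P: "P \<subseteq> {0..<N}"
    and e: "0 < \<epsilon>" and d1: "0 < \<delta>" and d2: "\<delta> \<le> 1/2"
  shows "(\<forall>b\<in>set_pmf (run_alg (util_oracle N kstar A V Alt m) (theAlg M r N kstar m w P \<epsilon> \<delta>)). valid_choice kstar m b) \<and>
    real (num_queries (util_oracle N kstar A V Alt m) (theAlg M r N kstar m w P \<epsilon> \<delta>))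
       \<le> (10368 * real ((M+1)^2) * r^2) * real N ^ 6 * ln (1 / \<delta>) / \<epsilon>\<^sup>2 \<and>
    measure_pmf.prob (run_alg (util_oracle N kstar A V Alt m) (theAlg M r N kstar m w P \<epsilon> \<delta>))
       {b. \<bar>F_agg N w (util kstar A V Alt b) P - Max ((\<lambda>U. F_agg N w U P) ` util_class kstar A V Alt m)\<bar> < \<epsilon>}
       \<ge> 1 - \<delta>"
proof -
  define orc where "orc = util_oracle N kstar A V Alt m"
  define opt where "opt = Max ((\<lambda>U. F_agg N w U P) ` util_class kstar A V Alt m)"
  define F where "F = (\<lambda>b. F_agg N w (util kstar A V Alt b) P)"
  have Mk: "\<forall>k<kstar. 1 \<le> m k" and MM: "\<forall>k<kstar. m k \<le> M" using MK by auto
  obtain bs where bs: "valid_choice kstar m bs" "opt = F bs"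
    using opt_props(1)[OF Mk, where N=N and w=w and P=P and A=A and V=V and Alt=Alt] unfolding opt_def F_def by blast
  have optge: "\<And>b. valid_choice kstar m b \<Longrightarrow> F b \<le> opt"
    using opt_props(2)[OF Mk, where N=N and w=w and P=P and A=A and V=V and Alt=Alt] unfolding opt_def F_def by blast
  have Lam0: "0 \<le> ln (1 / \<delta>)" using d1 d2 by simp
  show ?thesis
  proof (cases "2 * r * real N * real (N + 1) < \<epsilon>")
    case True
    have alg: "theAlg M r N kstar m w P \<epsilon> \<delta> = Ret (\<lambda>_. 0)" using True by (simp add: theAlg_def)
    have close: "\<bar>F (\<lambda>_. 0) - opt\<bar> < \<epsilon>"
    proof -
      have "F bs = F (\<lambda>_. 0) + (\<Sum>k\<in>{..N}. Dl kstar A V Alt N w P k (bs k))"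
        unfolding F_def by (rule F_decomp[OF P])
      moreover have "\<bar>\<Sum>k\<in>{..N}. Dl kstar A V Alt N w P k (bs k)\<bar> \<le> (\<Sum>k\<in>{..N}. 2 * r * real N)"
      proof -
        have "\<bar>\<Sum>k\<in>{..N}. Dl kstar A V Alt N w P k (bs k)\<bar> \<le> (\<Sum>k\<in>{..N}. \<bar>Dl kstar A V Alt N w P k (bs k)\<bar>)"
          by (rule sum_abs)
        also have "\<dots> \<le> (\<Sum>k\<in>{..N}. 2 * r * real N)"
        proof (rule sum_mono)
          fix k assume k: "k \<in> {..N}"
          have "valid_choice kstar m (bk k (bs k))"
            using bs(1) by (intro valid_bk[OF Mk]) (auto simp: valid_choice_def)
          then show "\<bar>Dl kstar A V Alt N w P k (bs k)\<bar> \<le> 2 * r * real N"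
            using Dl_bound[OF W P BR Mk] k by simp
        qed
        finally show ?thesis .
      qed
      moreover have "(\<Sum>k\<in>{..N}. 2 * r * real N) = 2 * r * real N * real (N + 1)" by simp
      ultimately show ?thesis using True bs(2) by linarith
    qed
    show ?thesis
      using close valid_b0[OF Mk] Lam0 e d1
      by (simp add: alg F_def opt_def[symmetric] orc_def[symmetric])
  next
    case False
    have N: "1 \<le> N"
    proof (rule ccontr)
      assume "\<not> 1 \<le> N" then have "N = 0" by simp
      then show False using False e by simp
    qed
    have eN: "\<epsilon> \<le> 2 * r * real N * real (N + 1)" using False by simp
    have r: "0 < r"
    proof (rule ccontr)
      assume "\<not> 0 < r"
      then have "2*r*real N*real (N+1) \<le> 0" by (simp add: mult_nonpos_nonneg)
      then show False using e eN by linarith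
    qed
    define L where "L = Lnum M r N \<epsilon> \<delta>"
    define Q where "Q = pmf_of_set (Omega N kstar L)"
    define res where "res = (\<lambda>\<omega>. decide N kstar m w P L \<omega> (\<lambda>q. if q \<in> set (qs N kstar m L \<omega>) then orc q else 0))"
    have run: "run_alg orc (theAlg M r N kstar m w P \<epsilon> \<delta>) = map_pmf res Q"
      unfolding res_def Q_def L_def by (rule run_theAlg[OF False])
    have setQ: "set_pmf Q = Omega N kstar L" unfolding Q_def
      by (rule set_pmf_of_set[OF Omega_nonempty finite_Omega])
    have L1: "1 \<le> L" unfolding L_def by (rule Lnum_props(4)[OF N e eN d1 d2])
    define \<eta> where "\<eta> = \<epsilon> / (4 * real (N + 1))"
    define B where "B = 2 * r * real N"
    define K where "K = real (N + 1) * real (M + 1)"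
    have eta: "0 < \<eta>" unfolding \<eta>_def using e by simp
    have B: "0 < B" unfolding B_def using r N by simp
    have K1: "1 \<le> K" unfolding K_def using mult_mono[of 1 "real (N+1)" 1 "real (M+1)"] by simp
    define Zf where "Zf = (\<lambda>k j T. real (card (Kset N k)) * cf N w P T *
        (util kstar A V Alt (bk k j) T - util kstar A V Alt (\<lambda>_. 0) T))"
    define bad where "bad = (\<lambda>(k, j). {\<omega>. real L * \<eta> \<le> \<bar>(\<Sum>x\<in>{k}\<times>{..<L}. Zf k j (\<omega> x))
        - real L * ((\<Sum>T\<in>Kset N k. Zf k j T) / real (card (Kset N k)))\<bar>})"
    define S where "S = Sigma (Lev N kstar) (\<lambda>k. {..<m k})"
    have finS: "finite S" unfolding S_def Lev_def by auto
    have expb: "2 * exp (- (real L * \<eta>\<^sup>2 / (2 * B\<^sup>2))) \<le> \<delta> / K"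
    proof -
      define X where "X = 2 * (2 * r * real N)\<^sup>2 * ln (2 * (real (N + 1) * real (M + 1)) / \<delta>) / (\<epsilon> / (4 * real (N + 1)))\<^sup>2"
      have XL: "X \<le> real L" unfolding X_def L_def by (rule Lnum_props(2)[OF N e eN d1 d2])
      have Xe: "X = 2 * B\<^sup>2 * ln (2 * K / \<delta>) / \<eta>\<^sup>2" unfolding X_def B_def K_def \<eta>_def ..
      have "ln (2 * K / \<delta>) = X * \<eta>\<^sup>2 / (2 * B\<^sup>2)" unfolding Xe using eta B by simp
      also have "\<dots> \<le> real L * \<eta>\<^sup>2 / (2 * B\<^sup>2)" using XL B
        by (intro divide_right_mono mult_right_mono) auto
      finally have "exp (- (real L * \<eta>\<^sup>2 / (2 * B\<^sup>2))) \<le> exp (- ln (2 * K / \<delta>))" by simp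
      also have "exp (- ln (2 * K / \<delta>)) = \<delta> / (2 * K)"
        using K1 d1 by (simp add: exp_minus)
      finally show ?thesis by simp
    qed
    have hb: "measure_pmf.prob Q (bad s) \<le> \<delta> / K" if s: "s \<in> S" for s
    proof -
      obtain k j where kj: "s = (k, j)" "k \<in> Lev N kstar" "j < m k" using s unfolding S_def by auto
      have v: "valid_choice kstar m (bk k j)" using kj valid_bk[OF Mk] by (auto simp: Lev_def)
      have "measure_pmf.prob Q (bad s) \<le> 2 * exp (- (real L * \<eta>\<^sup>2 / (2 * B\<^sup>2)))"
        unfolding Q_def kj bad_def using hoeff[OF kj(2) L1 B, of \<eta> "Zf k j"] eta Z_bound[OF W P BR Mk v]
        by (simp add: Zf_def B_def mult_ac)
      then show ?thesis using expb by simp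
    qed
    have cardS: "real (card S) \<le> K"
    proof -
      have "card S = (\<Sum>k\<in>Lev N kstar. card {..<m k})" unfolding S_def
        by (rule card_SigmaI) (auto simp: Lev_def)
      also have "\<dots> \<le> (\<Sum>k\<in>Lev N kstar. M)" using MM by (intro sum_mono) (auto simp: Lev_def)
      also have "\<dots> = card (Lev N kstar) * M" by simp
      also have "\<dots> \<le> (N + 1) * (M + 1)"
      proof (rule mult_le_mono)
        have "Lev N kstar \<subseteq> {..N}" by (auto simp: Lev_def)
        then show "card (Lev N kstar) \<le> N + 1" using card_mono[of "{..N}" "Lev N kstar"] by simp
      qed simp
      finally show ?thesis unfolding K_def by (metis of_nat_mono of_nat_mult)
    qed
    have union: "measure_pmf.prob Q (\<Union>s\<in>S. bad s) \<le> \<delta>"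
    proof -
      have "measure_pmf.prob Q (\<Union>s\<in>S. bad s) \<le> (\<Sum>s\<in>S. measure_pmf.prob Q (bad s))"
        by (rule measure_pmf.finite_measure_subadditive_finite[OF finS]) auto
      also have "\<dots> \<le> (\<Sum>s\<in>S. \<delta> / K)" by (intro sum_mono hb)
      also have "\<dots> = real (card S) * (\<delta> / K)" by simp
      also have "\<dots> \<le> K * (\<delta> / K)" using cardS d1 K1 by (intro mult_right_mono) auto
      also have "\<dots> = \<delta>" using K1 by simp
      finally show ?thesis .
    qed
    have good: "\<bar>F (res \<omega>) - opt\<bar> < \<epsilon>" if \<omega>: "\<omega> \<in> Omega N kstar L" and nb: "\<omega> \<notin> (\<Union>s\<in>S. bad s)" for \<omega>
    proof -
      have nb': "\<bar>(\<Sum>x\<in>{k}\<times>{..<L}. real (card (Kset N k)) * cf N w P (\<omega> x) *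
        (util kstar A V Alt (bk k j) (\<omega> x) - util kstar A V Alt (\<lambda>_. 0) (\<omega> x)))
        - real L * Dl kstar A V Alt N w P k j\<bar> < real L * \<eta>" if k: "k \<in> Lev N kstar" and j: "j < m k" for k j
      proof -
        have "(k, j) \<in> S" using k j by (simp add: S_def)
        then have "\<omega> \<notin> bad (k, j)" using nb by blast
        moreover have "k \<le> N" using k by (simp add: Lev_def)
        ultimately show ?thesis by (simp add: bad_def Zf_def Dl_as_mean not_le)
      qed
      have vres: "valid_choice kstar m (res \<omega>)" unfolding res_def by (rule decide_valid[OF Mk])
      have "F bs - F (res \<omega>) \<le> real (N + 1) * (2 * \<eta>)"
        unfolding F_def res_def orc_def
        by (rule good_event[OF W Mk P \<omega> L1 _ nb' bs(1)]) (use eta in auto)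
      also have "real (N + 1) * (2 * \<eta>) = \<epsilon> / 2" unfolding \<eta>_def by (simp add: field_simps)
      finally have "opt - F (res \<omega>) \<le> \<epsilon> / 2" using bs(2) by simp
      moreover have "F (res \<omega>) \<le> opt" by (rule optge[OF vres])
      ultimately show ?thesis using e by linarith
    qed
    have prob: "measure_pmf.prob Q {\<omega>. \<bar>F (res \<omega>) - opt\<bar> < \<epsilon>} \<ge> 1 - \<delta>"
    proof -
      let ?E = "{\<omega>. \<bar>F (res \<omega>) - opt\<bar> < \<epsilon>}"
      have sub: "UNIV - ?E \<subseteq> (UNIV - Omega N kstar L) \<union> (\<Union>s\<in>S. bad s)" using good by blast
      have z: "measure_pmf.prob Q (UNIV - Omega N kstar L) = 0"
        unfolding measure_pmf_zero_iff setQ by blast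
      have "measure_pmf.prob Q (UNIV - ?E) \<le> measure_pmf.prob Q ((UNIV - Omega N kstar L) \<union> (\<Union>s\<in>S. bad s))"
        using sub by (intro measure_pmf.finite_measure_mono) auto
      also have "\<dots> \<le> measure_pmf.prob Q (UNIV - Omega N kstar L) + measure_pmf.prob Q (\<Union>s\<in>S. bad s)"
        by (rule measure_Un_le) auto
      also have "\<dots> \<le> \<delta>" using z union by simp
      finally have "measure_pmf.prob Q (UNIV - ?E) \<le> \<delta>" .
      moreover have "measure_pmf.prob Q (UNIV - ?E) = 1 - measure_pmf.prob Q ?E"
        using measure_pmf.prob_compl[of ?E Q] by simp
      ultimately show ?thesis by simp
    qed
    have R1: "\<forall>b\<in>set_pmf (map_pmf res Q). valid_choice kstar m b"
      unfolding res_def using decide_valid[OF Mk] by auto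
    have R2: "real (num_queries orc (theAlg M r N kstar m w P \<epsilon> \<delta>))
       \<le> (10368 * real ((M+1)^2) * r^2) * real N ^ 6 * ln (1 / \<delta>) / \<epsilon>\<^sup>2"
      using nq_theAlg[OF MM, of orc r N w P \<epsilon> \<delta>] False query_arith[OF N e eN d1 d2, of M] by simp
    have R3: "measure_pmf.prob (map_pmf res Q) {b. \<bar>F b - opt\<bar> < \<epsilon>} \<ge> 1 - \<delta>"
      using prob by simp
    show ?thesis using R1 R2 R3 unfolding run[unfolded orc_def] orc_def[symmetric] F_def opt_def[symmetric]
      by (simp add: run)
  qed
qed


theorem proposition2:
  fixes M :: nat and r :: real
  shows "\<exists>(Alg :: nat \<Rightarrow> nat \<Rightarrow> (nat \<Rightarrow> nat) \<Rightarrow> (nat \<Rightarrow> real) \<Rightarrow> nat set \<Rightarrow> real \<Rightarrow> real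
                  \<Rightarrow> ((nat \<Rightarrow> nat) \<times> nat set, nat \<Rightarrow> nat) qalg) (C :: real) (d :: nat).
    \<forall>N kstar m w P \<epsilon> \<delta> (A :: nat set \<Rightarrow> 'm) V Alt.
      semivalue_weights N w \<and>
      (\<forall>k<kstar. 1 \<le> m k \<and> m k \<le> M) \<and>
      bounded_range N (util_class kstar A V Alt m) r \<and>
      P \<subseteq> {0..<N} \<and> 0 < \<epsilon> \<and> 0 < \<delta> \<and> \<delta> \<le> 1/2
      \<longrightarrow>
      (let orc = util_oracle N kstar A V Alt m;
           alg = Alg N kstar m w P \<epsilon> \<delta>;
           p = run_alg orc alg;
           opt = Max ((\<lambda>U. F_agg N w U P) ` util_class kstar A V Alt m)
       in (\<forall>b\<in>set_pmf p. valid_choice kstar m b) \<and>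
          real (num_queries orc alg) \<le> C * real N ^ d * ln (1 / \<delta>) / \<epsilon>\<^sup>2 \<and>
          measure_pmf.prob p
            {b. \<bar>F_agg N w (util kstar A V Alt b) P - opt\<bar> < \<epsilon>} \<ge> 1 - \<delta>)"
  apply (intro exI[of _ "theAlg M r"] exI[of _ "10368 * real ((M+1)^2) * r^2"] exI[of _ "6::nat"] allI impI)
  apply (elim conjE)
  apply (unfold Let_def)
  apply (rule main_lemma)
        apply assumption+
  done

end
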